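(* Let $C=(C_{i,j})$ be an $m\times n$ evolutionary stable (ES) configuration, where $n$ is divisible by $3$. Suppose that for some row index $i$ with $i+2\le m$, row $i+2$ is the string $101\,101\cdots101$ (i.e.\ $C_{i+2,l}=0$ if $l\equiv 2\pmod 3$ and $C_{i+2,l}=1$ otherwise, for all $1\le l\le n$). Then $C_{i,j}=0$ for every $j$ with $C_{i+2,j}=0$; that is, there is no $j$ with $C_{i+2,j}=0$ and $C_{i,j}=1$.
   Context: An $m\times n$ configuration is a $0$-$1$ matrix $C=(C_{i,j})$, $1\le i\le m$, $1\le j\le n$; $C_{i,j}=1$ means lot $(i,j)$ is occupied by a house. Row $1$ is the northernmost, row $m$ the southernmost; column $1$ westernmost, column $n$ easternmost. A house at $(i,j)$ is blocked from sunlight if the three lots $(i,j-1)$, $(i,j+1)$, $(i+1,j)$ all lie inside the grid and are all occupied (lots outside the grid never obstruct sunlight). $C$ is permissible if no house is blocked, and maximal if it is permissible and setting any single empty lot to $1$ yields a non-permissible configuration. A maximal configuration is resistant to predators if, for every empty lot, putting a house on it results in that new house being blocked; it is resistant to altruists if, for every empty lot, putting a house on it results in some other (already existing) house being blocked. An ES configuration is a maximal configuration resistant to both predators and altruists. *)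

theory Defs
  imports Main
begin

text \<open>An m x n configuration is modelled as a function C :: nat => nat => bool on
  the index box 1..m x 1..n; C i j = True means lot (i,j) is occupied.
  Values outside the box are irrelevant.\<close>

definition in_grid :: "nat \<Rightarrow> nat \<Rightarrow> nat \<Rightarrow> nat \<Rightarrow> bool" where
  "in_grid m n i j \<longleftrightarrow> 1 \<le> i \<and> i \<le> m \<and> 1 \<le> j \<and> j \<le> n"

definition blocked :: "nat \<Rightarrow> nat \<Rightarrow> (nat \<Rightarrow> nat \<Rightarrow> bool) \<Rightarrow> nat \<Rightarrow> nat \<Rightarrow> bool" where
  "blocked m n C i j \<longleftrightarrow> C i j
     \<and> in_grid m n i (j - 1) \<and> j \<ge> 2 \<and> in_grid m n i (j + 1) \<and> in_grid m n (i + 1) j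
     \<and> C i (j - 1) \<and> C i (j + 1) \<and> C (i + 1) j"

definition permissible :: "nat \<Rightarrow> nat \<Rightarrow> (nat \<Rightarrow> nat \<Rightarrow> bool) \<Rightarrow> bool" where
  "permissible m n C \<longleftrightarrow> (\<forall>i j. in_grid m n i j \<longrightarrow> \<not> blocked m n C i j)"

definition add_house :: "(nat \<Rightarrow> nat \<Rightarrow> bool) \<Rightarrow> nat \<Rightarrow> nat \<Rightarrow> (nat \<Rightarrow> nat \<Rightarrow> bool)" where
  "add_house C a b = (\<lambda>i j. if i = a \<and> j = b then True else C i j)"

definition maximal :: "nat \<Rightarrow> nat \<Rightarrow> (nat \<Rightarrow> nat \<Rightarrow> bool) \<Rightarrow> bool" where
  "maximal m n C \<longleftrightarrow> permissible m n C \<and>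
     (\<forall>a b. in_grid m n a b \<and> \<not> C a b \<longrightarrow> \<not> permissible m n (add_house C a b))"

definition resistant_predators :: "nat \<Rightarrow> nat \<Rightarrow> (nat \<Rightarrow> nat \<Rightarrow> bool) \<Rightarrow> bool" where
  "resistant_predators m n C \<longleftrightarrow>
     (\<forall>a b. in_grid m n a b \<and> \<not> C a b \<longrightarrow> blocked m n (add_house C a b) a b)"

definition resistant_altruists :: "nat \<Rightarrow> nat \<Rightarrow> (nat \<Rightarrow> nat \<Rightarrow> bool) \<Rightarrow> bool" where
  "resistant_altruists m n C \<longleftrightarrow>
     (\<forall>a b. in_grid m n a b \<and> \<not> C a b \<longrightarrow>
        (\<exists>i j. in_grid m n i j \<and> C i j \<and> blocked m n (add_house C a b) i j))"

definition ES :: "nat \<Rightarrow> nat \<Rightarrow> (nat \<Rightarrow> nat \<Rightarrow> bool) \<Rightarrow> bool" where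
  "ES m n C \<longleftrightarrow> maximal m n C \<and> resistant_predators m n C \<and> resistant_altruists m n C"

end

theory Submission
  imports Defs
begin

definition needy :: "nat \<Rightarrow> (nat \<Rightarrow> nat \<Rightarrow> bool) \<Rightarrow> nat \<Rightarrow> nat \<Rightarrow> bool" where
  "needy n C r c \<longleftrightarrow> \<not> C r c \<and> \<not> (3 \<le> c \<and> C r (c-2) \<and> C (r+1) (c-1))
      \<and> \<not> (c+2 \<le> n \<and> C r (c+2) \<and> C (r+1) (c+1))"

lemma L_emp:
  assumes "ES m n C" "1 \<le> r" "r \<le> m" "1 \<le> c" "c \<le> n" "\<not> C r c"
  shows "2 \<le> c \<and> c+1 \<le> n \<and> r+1 \<le> m \<and> C r (c-1) \<and> C r (c+1) \<and> C (r+1) c"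
proof -
  from assms(1) have "resistant_predators m n C" by (simp add: ES_def)
  hence "blocked m n (add_house C r c) r c" using assms by (auto simp: resistant_predators_def in_grid_def)
  thus ?thesis by (auto simp: blocked_def add_house_def in_grid_def split: if_splits)
qed

lemma L_perm:
  assumes "ES m n C" "1 \<le> r" "r+1 \<le> m" "2 \<le> c" "c+1 \<le> n" "C r c" "C r (c-1)" "C r (c+1)"
  shows "\<not> C (r+1) c"
proof
  assume h: "C (r+1) c"
  from assms(1) have "permissible m n C" by (simp add: ES_def maximal_def)
  hence "\<not> blocked m n C r c" using assms by (auto simp: permissible_def in_grid_def)
  thus False using assms h by (auto simp: blocked_def in_grid_def)
qed

lemma L_alt:
  assumes "ES m n C" "1 \<le> r" "r \<le> m" "1 \<le> c" "c \<le> n" "needy n C r c"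
  shows "2 \<le> r \<and> C (r-1) (c-1) \<and> C (r-1) c \<and> C (r-1) (c+1)"
proof -
  have perm: "permissible m n C" using assms(1) by (simp add: ES_def maximal_def)
  have "resistant_altruists m n C" using assms(1) by (simp add: ES_def)
  moreover have nc: "\<not> C r c" using assms(6) by (simp add: needy_def)
  moreover have ig: "in_grid m n r c" using assms by (simp add: in_grid_def)
  ultimately obtain a b where ab: "in_grid m n a b" "C a b" "blocked m n (add_house C r c) a b"
    unfolding resistant_altruists_def by blast
  have nb: "\<not> blocked m n C a b" using perm ab(1) by (simp add: permissible_def)
  have cases: "(a = r \<and> b = c+1) \<or> (a = r \<and> b+1 = c) \<or> (a+1 = r \<and> b = c)"
  proof (rule ccontr)
    assume "\<not> ?thesis"
    hence "blocked m n C a b" using ab nc unfolding blocked_def add_house_def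
      by (auto split: if_splits)
    thus False using nb by simp
  qed
  thus ?thesis
  proof (elim disjE)
    assume "a = r \<and> b = c+1"
    thus ?thesis using ab(3) assms(6) by (auto simp: blocked_def add_house_def needy_def in_grid_def split: if_splits)
  next
    assume "a = r \<and> b+1 = c"
    thus ?thesis using ab(3) assms(6) by (auto simp: blocked_def add_house_def needy_def in_grid_def split: if_splits)
  next
    assume "a+1 = r \<and> b = c"
    thus ?thesis using ab(3) assms(6) by (auto simp: blocked_def add_house_def needy_def in_grid_def split: if_splits)
  qed
qed

definition RS :: "nat \<Rightarrow> (nat \<Rightarrow> nat \<Rightarrow> bool) \<Rightarrow> nat \<Rightarrow> bool" where
  "RS n C r \<longleftrightarrow> (\<forall>c k. 1 \<le> c \<longrightarrow> c \<le> n \<longrightarrow> needy n C r c \<longrightarrow> (\<forall>j\<le>k. \<not> C r (c+3*j))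
      \<longrightarrow> c+3*k+2 \<le> n \<longrightarrow> C r (c+3*k+2))"

definition LS :: "nat \<Rightarrow> (nat \<Rightarrow> nat \<Rightarrow> bool) \<Rightarrow> nat \<Rightarrow> bool" where
  "LS n C r \<longleftrightarrow> (\<forall>c k. 1 \<le> c \<longrightarrow> c \<le> n \<longrightarrow> needy n C r c \<longrightarrow> (\<forall>j\<le>k. \<not> C r (c-3*j))
      \<longrightarrow> 3*k+2 < c \<longrightarrow> C r (c-3*k-2))"

lemma step_R:
  assumes ES: "ES m n C" and r2: "2 \<le> r" and rm: "r+1 \<le> m" and LSW: "LS n C (r-1)"
  shows "RS n C r"
  unfolding RS_def
proof (intro allI impI, rule ccontr)
  fix c k
  assume c1: "1 \<le> c" and cn: "c \<le> n" and nd: "needy n C r c" and ch: "\<forall>j\<le>k. \<not> C r (c+3*j)"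
    and kn: "c+3*k+2 \<le> n" and nc: "\<not> C r (c+3*k+2)"
  define W where "W = r - 1"
  have W1: "1 \<le> W" and WW: "W+1 = r" and Wm: "W+1 \<le> m" using r2 rm by (auto simp: W_def)
  have up: "C W (c-1)" "C W c" "C W (c+1)" using L_alt[OF ES _ _ c1 cn nd] r2 rm by (auto simp: W_def)
  have empX: "\<And>x. 1 \<le> x \<Longrightarrow> x \<le> n \<Longrightarrow> \<not> C r x \<Longrightarrow> C r (x-1) \<and> C r (x+1) \<and> 2 \<le> x \<and> x+1 \<le> n"
  proof -
    fix x assume "1 \<le> x" "x \<le> n" "\<not> C r x"
    moreover have "1 \<le> r" "r \<le> m" using r2 rm by auto
    ultimately show "C r (x-1) \<and> C r (x+1) \<and> 2 \<le> x \<and> x+1 \<le> n" using L_emp[OF ES] by blast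
  qed
  have overX: "\<And>x. 1 \<le> x \<Longrightarrow> x \<le> n \<Longrightarrow> \<not> C r x \<Longrightarrow> C W x"
  proof (rule ccontr)
    fix x assume "1 \<le> x" "x \<le> n" "\<not> C r x" "\<not> C W x"
    thus False using L_emp[OF ES W1, of x] Wm WW by auto
  qed
  have permW: "\<And>x. 2 \<le> x \<Longrightarrow> x+1 \<le> n \<Longrightarrow> C W x \<Longrightarrow> C W (x-1) \<Longrightarrow> C W (x+1) \<Longrightarrow> \<not> C r x"
  proof -
    fix x assume "2 \<le> x" "x+1 \<le> n" "C W x" "C W (x-1)" "C W (x+1)"
    hence "\<not> C (W+1) x" using L_perm[OF ES W1 Wm] by blast
    thus "\<not> C r x" using WW by simp
  qed
  define d where "d = c+3*k+1"
  have e0: "\<not> C r (c+3*k)" using ch by auto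
  have Xd: "C r d" using empX[of "c+3*k+2"] nc kn by (auto simp: d_def)
  have Wd1: "C W (c+3*k)" using overX[of "c+3*k"] e0 kn c1 by auto
  have Wd2: "C W (c+3*k+2)" using overX[of "c+3*k+2"] nc kn by auto
  have nWd: "\<not> C W d"
  proof
    assume "C W d"
    moreover have "d - 1 = c+3*k" "d+1 = c+3*k+2" by (auto simp: d_def)
    ultimately have "\<not> C r d" using permW[of d] Wd1 Wd2 kn c1 by (auto simp: d_def)
    thus False using Xd by simp
  qed
  have k1: "k \<ge> 1"
  proof (rule ccontr)
    assume "\<not> k \<ge> 1" hence "k = 0" by simp
    hence "d = c+1" by (simp add: d_def)
    thus False using nWd up(3) by simp
  qed
  have ndW: "needy n C W d"
    unfolding needy_def using nWd e0 nc WW by (auto simp: d_def)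
  have nrc: "\<not> C r c" using nd by (simp add: needy_def)
  have Xc1: "C r (c+1)" using empX[OF c1 cn nrc] by simp
  have nWc2: "\<not> C W (c+2)"
  proof
    assume "C W (c+2)"
    hence "\<not> C r (c+1)" using permW[of "c+1"] up c1 kn k1 by auto
    thus False using Xc1 by simp
  qed
  define J where "J = {j. j < k \<and> \<not> C W (c+3*j+2)}"
  have J0: "0 \<in> J" using k1 nWc2 by (simp add: J_def)
  have Jf: "finite J" by (simp add: J_def)
  define js where "js = Max J"
  have js: "js \<in> J" using J0 Jf js_def Max_in by blast
  have jsmax: "\<And>j. j \<in> J \<Longrightarrow> j \<le> js" using Jf js_def by simp
  have jsk: "js < k" "\<not> C W (c+3*js+2)" using js by (auto simp: J_def)
  have mid: "\<And>j. js < j \<Longrightarrow> j < k \<Longrightarrow> \<not> C W (c+3*j+1)"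
  proof
    fix j assume a: "js < j" "j < k" "C W (c+3*j+1)"
    have "j \<notin> J" using a jsmax by fastforce
    hence w2: "C W (c+3*j+2)" using a by (auto simp: J_def)
    have ej: "\<not> C r (c+3*j)" using ch a by auto
    have w0: "C W (c+3*j)" using overX[of "c+3*j"] ej a kn by auto
    have x1: "C r (c+3*j+1)" using empX[of "c+3*j"] ej a kn by auto
    have "\<not> C r (c+3*j+1)" using permW[of "c+3*j+1"] w0 w2 a kn by auto
    thus False using x1 by simp
  qed
  define k' where "k' = k - js - 1"
  have chW: "\<forall>j'\<le>k'. \<not> C W (d - 3*j')"
  proof (intro allI impI)
    fix j' assume j': "j' \<le> k'"
    show "\<not> C W (d - 3*j')"
    proof (cases "j' = 0")
      case True thus ?thesis using nWd by simp
    next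
      case False
      define j where "j = k - j'"
      have "js < j" "j < k" using j' False jsk by (auto simp: j_def k'_def)
      moreover have "d - 3*j' = c+3*j+1" using j' jsk by (auto simp: j_def k'_def d_def)
      ultimately show ?thesis using mid by simp
    qed
  qed
  have lt: "3*k'+2 < d" using jsk by (auto simp: k'_def d_def)
  have eq: "d - 3*k' - 2 = c+3*js+2" using jsk by (auto simp: k'_def d_def)
  have d1: "1 \<le> d" "d \<le> n" using kn by (auto simp: d_def)
  have "C W (d - 3*k' - 2)" using LSW d1 ndW chW lt unfolding LS_def W_def by blast
  thus False using eq jsk by simp
qed

lemma step_L:
  assumes ES: "ES m n C" and r2: "2 \<le> r" and rm: "r+1 \<le> m" and RSW: "RS n C (r-1)"
  shows "LS n C r"
  unfolding LS_def
proof (intro allI impI, rule ccontr)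
  fix c k
  assume c1: "1 \<le> c" and cn: "c \<le> n" and nd: "needy n C r c" and ch: "\<forall>j\<le>k. \<not> C r (c-3*j)"
    and kc: "3*k+2 < c" and nc: "\<not> C r (c-3*k-2)"
  define W where "W = r - 1"
  have W1: "1 \<le> W" and WW: "W+1 = r" and Wm: "W+1 \<le> m" using r2 rm by (auto simp: W_def)
  have up: "C W (c-1)" "C W c" "C W (c+1)" using L_alt[OF ES _ _ c1 cn nd] r2 rm by (auto simp: W_def)
  have empX: "\<And>x. 1 \<le> x \<Longrightarrow> x \<le> n \<Longrightarrow> \<not> C r x \<Longrightarrow> C r (x-1) \<and> C r (x+1) \<and> 2 \<le> x \<and> x+1 \<le> n"
  proof -
    fix x assume "1 \<le> x" "x \<le> n" "\<not> C r x"
    moreover have "1 \<le> r" "r \<le> m" using r2 rm by auto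
    ultimately show "C r (x-1) \<and> C r (x+1) \<and> 2 \<le> x \<and> x+1 \<le> n" using L_emp[OF ES] by blast
  qed
  have overX: "\<And>x. 1 \<le> x \<Longrightarrow> x \<le> n \<Longrightarrow> \<not> C r x \<Longrightarrow> C W x"
  proof (rule ccontr)
    fix x assume "1 \<le> x" "x \<le> n" "\<not> C r x" "\<not> C W x"
    thus False using L_emp[OF ES W1, of x] Wm WW by auto
  qed
  have permW: "\<And>x. 2 \<le> x \<Longrightarrow> x+1 \<le> n \<Longrightarrow> C W x \<Longrightarrow> C W (x-1) \<Longrightarrow> C W (x+1) \<Longrightarrow> \<not> C r x"
  proof -
    fix x assume "2 \<le> x" "x+1 \<le> n" "C W x" "C W (x-1)" "C W (x+1)"
    hence "\<not> C (W+1) x" using L_perm[OF ES W1 Wm] by blast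
    thus "\<not> C r x" using WW by simp
  qed
  define d where "d = c-3*k-1"
  have dm: "d - 1 = c-3*k-2" "d+1 = c-3*k" "2 \<le> d" using kc by (auto simp: d_def)
  have e0: "\<not> C r (c-3*k)" using ch by auto
  have Xd0: "C r (c-3*k-2+1)" using empX[of "c-3*k-2"] nc kc cn by auto
  have "c-3*k-2+1 = d" using kc by (simp add: d_def)
  hence Xd: "C r d" using Xd0 by simp
  have Wd1: "C W (c-3*k)" using overX[of "c-3*k"] e0 kc cn by auto
  have Wd2: "C W (c-3*k-2)" using overX[of "c-3*k-2"] nc kc cn by auto
  have nWd: "\<not> C W d"
  proof
    assume "C W d"
    hence "\<not> C r d" using permW[of d] Wd1 Wd2 dm kc cn by (auto simp: d_def)
    thus False using Xd by simp
  qed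
  have k1: "k \<ge> 1"
  proof (rule ccontr)
    assume "\<not> k \<ge> 1" hence "k = 0" by simp
    hence "d = c-1" by (simp add: d_def)
    thus False using nWd up(1) by simp
  qed
  have ndW: "needy n C W d"
    unfolding needy_def using nWd e0 nc WW dm by auto
  have nrc: "\<not> C r c" using nd by (simp add: needy_def)
  have Xc1: "C r (c-1)" using empX[OF c1 cn nrc] by simp
  have nWc2: "\<not> C W (c-2)"
  proof
    assume h: "C W (c-2)"
    have "c - 1 - 1 = c-2" "c-1+1 = c" "2 \<le> c-1" "c-1+1 \<le> n" using kc k1 cn by auto
    hence "\<not> C r (c-1)" using permW[of "c-1"] up h by auto
    thus False using Xc1 by simp
  qed
  define J where "J = {j. j < k \<and> \<not> C W (c-3*j-2)}"
  have J0: "0 \<in> J"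
  proof -
    have "c - 3*(0::nat) - 2 = c - 2" by simp
    hence a: "\<not> C W (c - 3*(0::nat) - 2)" using nWc2 by metis
    have b: "(0::nat) < k" using k1 by simp
    show ?thesis unfolding J_def using a b by blast
  qed
  have Jf: "finite J" by (simp add: J_def)
  define js where "js = Max J"
  have js: "js \<in> J" using J0 Jf js_def Max_in by blast
  have jsmax: "\<And>j. j \<in> J \<Longrightarrow> j \<le> js" using Jf js_def by simp
  have jsk: "js < k" "\<not> C W (c-3*js-2)" using js by (auto simp: J_def)
  have mid: "\<And>j. js < j \<Longrightarrow> j < k \<Longrightarrow> \<not> C W (c-3*j-1)"
  proof
    fix j assume a: "js < j" "j < k" "C W (c-3*j-1)"
    have "j \<notin> J" using a jsmax by fastforce
    hence w2: "C W (c-3*j-2)" using a by (auto simp: J_def)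
    have ej: "\<not> C r (c-3*j)" using ch a by auto
    have w0: "C W (c-3*j)" using overX[of "c-3*j"] ej a kc cn by auto
    have x1: "C r (c-3*j-1)" using empX[of "c-3*j"] ej a kc cn by auto
    have ar: "c-3*j-1-1 = c-3*j-2" "c-3*j-1+1 = c-3*j" "2 \<le> c-3*j-1" "c-3*j-1+1 \<le> n"
      using a kc cn by auto
    have "\<not> C r (c-3*j-1)" using permW[of "c-3*j-1"] w0 w2 a ar by auto
    thus False using x1 by simp
  qed
  define k' where "k' = k - js - 1"
  have chW: "\<forall>j'\<le>k'. \<not> C W (d + 3*j')"
  proof (intro allI impI)
    fix j' assume j': "j' \<le> k'"
    show "\<not> C W (d + 3*j')"
    proof (cases "j' = 0")
      case True thus ?thesis using nWd by simp
    next
      case False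
      define j where "j = k - j'"
      have "js < j" "j < k" using j' False jsk by (auto simp: j_def k'_def)
      moreover have "d + 3*j' = c-3*j-1" using j' jsk kc by (auto simp: j_def k'_def d_def)
      ultimately show ?thesis using mid by simp
    qed
  qed
  have eq: "d + 3*k' + 2 = c-3*js-2" using jsk kc by (auto simp: k'_def d_def)
  have bd: "d + 3*k' + 2 \<le> n" using eq cn by simp
  have d1: "1 \<le> d" "d \<le> n" using kc cn by (auto simp: d_def)
  have "C W (d + 3*k' + 2)" using RSW d1 ndW chW bd unfolding RS_def W_def by blast
  thus False using eq jsk by simp
qed

lemma inv_RL:
  assumes ES: "ES m n C"
  shows "1 \<le> r \<Longrightarrow> r+1 \<le> m \<Longrightarrow> RS n C r \<and> LS n C r"
proof (induction r)
  case 0 thus ?case by simp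
next
  case (Suc r)
  show ?case
  proof (cases "r = 0")
    case True
    have nn: "\<And>c. 1 \<le> c \<Longrightarrow> c \<le> n \<Longrightarrow> \<not> needy n C 1 c"
    proof
      fix c assume "1 \<le> c" "c \<le> n" "needy n C 1 c"
      thus False using L_alt[OF ES, of 1 c] Suc.prems by auto
    qed
    show ?thesis using True nn unfolding RS_def LS_def by auto
  next
    case False
    hence IH: "RS n C r \<and> LS n C r" using Suc by auto
    have a: "2 \<le> Suc r" "Suc r + 1 \<le> m" using False Suc.prems by auto
    show ?thesis using step_R[OF ES a] step_L[OF ES a] IH by simp
  qed
qed

lemma mod3_up: "(x::nat) mod 3 = a \<Longrightarrow> (x + k) mod 3 = (a + k) mod 3"
proof -
  assume "x mod 3 = a"
  moreover have "(x + k) mod 3 = (x mod 3 + k) mod 3" by (simp add: mod_add_left_eq)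
  ultimately show ?thesis by simp
qed

lemma mod3_sub: "k \<le> (x::nat) \<Longrightarrow> x mod 3 = a \<Longrightarrow> (x - k) mod 3 = (a + 2*k) mod 3"
proof -
  assume k: "k \<le> x" and a: "x mod 3 = a"
  have "(a + 2*k) mod 3 = (x mod 3 + 2*k) mod 3" using a by simp
  also have "\<dots> = (x + 2*k) mod 3" by (simp add: mod_add_left_eq)
  also have "x + 2*k = (x - k) + 3*k" using k by simp
  also have "((x - k) + 3*k) mod 3 = (x-k) mod 3" by simp
  finally show ?thesis by simp
qed

lemma lb0: "(x::nat) mod 3 = 0 \<Longrightarrow> 1 \<le> x \<Longrightarrow> 3 \<le> x"
proof (rule ccontr)
  assume a: "x mod 3 = 0" "1 \<le> x" "\<not> 3 \<le> x"
  hence "x = 1 \<or> x = 2" by auto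
  thus False using a by auto
qed

lemma lb1: "(x::nat) mod 3 = 1 \<Longrightarrow> 2 \<le> x \<Longrightarrow> 4 \<le> x"
proof (rule ccontr)
  assume a: "x mod 3 = 1" "2 \<le> x" "\<not> 4 \<le> x"
  hence "x = 2 \<or> x = 3" by auto
  thus False using a by auto
qed

lemma lb2a: "(x::nat) mod 3 = 2 \<Longrightarrow> 2 \<le> x"
proof (rule ccontr)
  assume a: "x mod 3 = 2" "\<not> 2 \<le> x"
  hence "x = 0 \<or> x = 1" by auto
  thus False using a by auto
qed

lemma lb2b: "(x::nat) mod 3 = 2 \<Longrightarrow> 3 \<le> x \<Longrightarrow> 5 \<le> x"
proof (rule ccontr)
  assume a: "x mod 3 = 2" "3 \<le> x" "\<not> 5 \<le> x"
  hence "x = 3 \<or> x = 4" by auto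
  thus False using a by auto
qed

lemma final_part:
  assumes ES: "ES m n C" and n3: "3 dvd n" and i1: "1 \<le> i" and im: "i+2 \<le> m"
    and P: "\<forall>l. 1 \<le> l \<and> l \<le> n \<longrightarrow> (C (i+2) l \<longleftrightarrow> l mod 3 \<noteq> 2)"
    and RSi: "RS n C i" and LSi: "LS n C i"
    and p1: "1 \<le> p" and pn: "p \<le> n" and p2: "p mod 3 = 2"
  shows "\<not> C i p"
proof
  assume Cp: "C i p"
  have im': "i \<le> m" "i+1 \<le> m" using im by auto
  have empR: "\<And>x. 1 \<le> x \<Longrightarrow> x \<le> n \<Longrightarrow> \<not> C i x \<Longrightarrow> 2 \<le> x \<and> x+1 \<le> n \<and> C i (x-1) \<and> C i (x+1) \<and> C (i+1) x"
    using L_emp[OF ES i1 im'(1)] by blast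
  have permR: "\<And>x. 2 \<le> x \<Longrightarrow> x+1 \<le> n \<Longrightarrow> C i x \<Longrightarrow> C i (x-1) \<Longrightarrow> C i (x+1) \<Longrightarrow> \<not> C (i+1) x"
    using L_perm[OF ES i1 im'(2)] by blast
  have i1': "1 \<le> i+1" by simp
  have im2: "i+1 \<le> m" "i+1+1 \<le> m" using im by auto
  have S1: "\<And>x. 1 \<le> x \<Longrightarrow> x \<le> n \<Longrightarrow> x mod 3 = 2 \<Longrightarrow> C (i+1) x"
  proof (rule ccontr)
    fix x assume a: "1 \<le> x" "x \<le> n" "x mod 3 = 2" "\<not> C (i+1) x"
    hence "C (i+1+1) x" using L_emp[OF ES i1' im2(1), of x] by blast
    thus False using P a by auto
  qed
  have S2: "\<And>x. 1 \<le> x \<Longrightarrow> x+1 \<le> n \<Longrightarrow> x mod 3 = 0 \<Longrightarrow> C (i+1) x \<longleftrightarrow> \<not> C (i+1) (x+1)"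
  proof -
    fix x assume a: "1 \<le> x" "x+1 \<le> n" "x mod 3 = 0"
    show "C (i+1) x \<longleftrightarrow> \<not> C (i+1) (x+1)"
    proof
      assume h: "C (i+1) x"
      show "\<not> C (i+1) (x+1)"
      proof
        assume h2: "C (i+1) (x+1)"
        have x3: "3 \<le> x" using lb0[OF a(3) a(1)] .
        have "(x-1) mod 3 = 2" using mod3_sub[of 1 x 0] a x3 by simp
        hence "C (i+1) (x-1)" using S1[of "x-1"] a x3 by auto
        hence "\<not> C (i+1+1) x" using L_perm[OF ES i1' im2(2), of x] h h2 a x3 by auto
        moreover have "C (i+2) x" using P a by auto
        ultimately show False by simp
      qed
    next
      assume "\<not> C (i+1) (x+1)"
      thus "C (i+1) x" using L_emp[OF ES i1' im2(1), of x] a by auto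
    qed
  qed
  have nlt: "\<And>x. x \<le> n \<Longrightarrow> x mod 3 \<noteq> 0 \<Longrightarrow> x < n"
  proof -
    fix x assume "x \<le> n" "x mod 3 \<noteq> 0"
    moreover have "n mod 3 = 0" using n3 by simp
    ultimately show "x < n" by (cases "x = n") auto
  qed
  have R: "(1 \<le> x \<longrightarrow> x \<le> n \<longrightarrow> x mod 3 = 0 \<longrightarrow> \<not> C i x \<longrightarrow> False) \<and>
    (\<forall>q t. x = q+3*t \<longrightarrow> 3 \<le> q \<longrightarrow> x \<le> n \<longrightarrow> x mod 3 = 2 \<longrightarrow> (\<forall>j\<le>t. \<not> C i (q+3*j))
       \<longrightarrow> \<not> C i (q-2) \<longrightarrow> \<not> C (i+1) (x-1) \<longrightarrow> False)" for x
  proof (induction "n - x" arbitrary: x rule: less_induct)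
    case less
    note IH = less.hyps
    show ?case
    proof (intro conjI impI allI)
      assume x1: "1 \<le> x" and xn: "x \<le> n" and x0: "x mod 3 = 0" and nx: "\<not> C i x"
      have e: "C i (x+1)" "C (i+1) x" "x+1 \<le> n" using empR[OF x1 xn nx] by auto
      have ns1: "\<not> C (i+1) (x+1)" using S2[OF x1 e(3) x0] e(2) by simp
      have m1: "(x+1) mod 3 = 1" "(x+2) mod 3 = 2" "(x+3) mod 3 = 0" using mod3_up[OF x0, of 1] mod3_up[OF x0, of 2] mod3_up[OF x0, of 3] by simp_all
      have x2n: "x+2 \<le> n" using nlt[OF e(3)] m1 by auto
      show False
      proof (cases "C i (x+2)")
        case False
        have lt: "n - (x+2) < n - x" using x2n by auto
        have f: "x+2 = (x+2) + 3*0" "3 \<le> x+2" "\<forall>j\<le>0. \<not> C i ((x+2)+3*j)" "\<not> C i (x+2-2)"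
          "\<not> C (i+1) (x+2-1)" using False nx ns1 x1 by auto
        show False by (rule conjunct2[OF IH[OF lt], rule_format (no_asm), OF f(1) f(2) x2n m1(2) f(3) f(4) f(5)])
      next
        case True
        have x3n: "x+3 \<le> n" using nlt[OF x2n] m1 by auto
        have "\<not> C i (x+3)"
        proof
          assume "C i (x+3)"
          hence "\<not> C (i+1) (x+2)" using permR[of "x+2"] True e x3n by (auto simp: eval_nat_numeral)
          thus False using S1[of "x+2"] x2n m1 by auto
        qed
        moreover have lt: "n - (x+3) < n - x" using x3n by auto
        moreover have "1 \<le> x+3" by simp
        ultimately show False using conjunct1[OF IH[OF lt], rule_format (no_asm), OF _ x3n m1(3)] by blast
      qed
    next
      fix q t
      assume xq: "x = q+3*t" and q3: "3 \<le> q" and xn: "x \<le> n" and x2: "x mod 3 = 2"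
        and ch: "\<forall>j\<le>t. \<not> C i (q+3*j)" and nq: "\<not> C i (q-2)" and ns: "\<not> C (i+1) (x-1)"
      have nx: "\<not> C i x" using ch xq by auto
      have x1: "1 \<le> x" using xq q3 by auto
      show False
      proof (cases "needy n C i x")
        case True
        have chx: "\<forall>j\<le>t. \<not> C i (x-3*j)"
        proof (intro allI impI)
          fix j assume "j \<le> t"
          hence "x - 3*j = q + 3*(t-j)" "t - j \<le> t" using xq by auto
          thus "\<not> C i (x-3*j)" using ch by metis
        qed
        have "3*t+2 < x" using xq q3 by auto
        hence "C i (x-3*t-2)" using LSi x1 xn True chx unfolding LS_def by blast
        moreover have "x-3*t-2 = q-2" using xq by auto
        ultimately show False using nq by simp
      next
        case False
        hence r: "x+2 \<le> n" "C i (x+2)" "C (i+1) (x+1)" using nx ns unfolding needy_def by auto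
        have m1: "(x+1) mod 3 = 0" "(x+2) mod 3 = 1" "(x+3) mod 3 = 2" "(x+4) mod 3 = 0" using mod3_up[OF x2, of 1] mod3_up[OF x2, of 2] mod3_up[OF x2, of 3] mod3_up[OF x2, of 4] by simp_all
        have ns2: "\<not> C (i+1) (x+2)" using S2[of "x+1"] r m1 by auto
        have e: "C i (x+1)" using empR[OF x1 xn nx] by auto
        have x3n: "x+3 \<le> n" using nlt[OF r(1)] m1 by auto
        show False
        proof (cases "C i (x+3)")
          case False
          have lt: "n - (x+3) < n - x" using x3n by auto
          have a: "x+3 = q + 3*(t+1)" using xq by simp
          have b: "\<forall>j\<le>t+1. \<not> C i (q+3*j)"
          proof (intro allI impI)
            fix j assume "j \<le> t+1"
            thus "\<not> C i (q+3*j)"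
            proof (cases "j = t+1")
              case True thus ?thesis using False xq by (simp add: algebra_simps)
            next
              case False thus ?thesis using ch \<open>j \<le> t+1\<close> by auto
            qed
          qed
          have c: "\<not> C (i+1) (x+3-1)" using ns2 by simp
          show False by (rule conjunct2[OF IH[OF lt], rule_format (no_asm), OF a q3 x3n m1(3) b nq c])
        next
          case True
          have x4n: "x+4 \<le> n" using nlt[OF x3n] m1 by auto
          have "\<not> C i (x+4)"
          proof
            assume "C i (x+4)"
            hence "\<not> C (i+1) (x+3)" using permR[of "x+3"] True r x4n by (auto simp: eval_nat_numeral)
            thus False using S1[of "x+3"] x3n m1 by auto
          qed
          moreover have lt: "n - (x+4) < n - x" using x4n by auto
          moreover have "1 \<le> x+4" by simp
          ultimately show False using conjunct1[OF IH[OF lt], rule_format (no_asm), OF _ x4n m1(4)] by blast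
        qed
      qed
    qed
  qed
  have L: "(1 \<le> x \<longrightarrow> x \<le> n \<longrightarrow> x mod 3 = 1 \<longrightarrow> \<not> C i x \<longrightarrow> False) \<and>
    (\<forall>q t. q = x+3*t \<longrightarrow> q+2 \<le> n \<longrightarrow> x mod 3 = 2 \<longrightarrow> (\<forall>j\<le>t. \<not> C i (x+3*j))
       \<longrightarrow> \<not> C i (q+2) \<longrightarrow> \<not> C (i+1) (x+1) \<longrightarrow> False)" for x
  proof (induction x rule: less_induct)
    case (less x)
    note IH = less.IH
    show ?case
    proof (intro conjI impI allI)
      assume x1: "1 \<le> x" and xn: "x \<le> n" and x0: "x mod 3 = 1" and nx: "\<not> C i x"
      have e: "2 \<le> x" "C i (x-1)" "C (i+1) x" using empR[OF x1 xn nx] by auto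
      have x4: "4 \<le> x" using lb1[OF x0 e(1)] .
      have m1: "(x-1) mod 3 = 0" "(x-2) mod 3 = 2" "(x-3) mod 3 = 1"
        using mod3_sub[OF _ x0, of 1] mod3_sub[OF _ x0, of 2] mod3_sub[OF _ x0, of 3] x4 by simp_all
      have eqs: "x-1+1 = x" "x-2+1 = x-1" "x-2-1 = x-3" "x-2+2 = x" using x4 by auto
      have ns1: "\<not> C (i+1) (x-1)" using S2[of "x-1"] x4 xn m1 eqs e(3) by auto
      show False
      proof (cases "C i (x-2)")
        case False
        have lt: "x-2 < x" using x4 by auto
        have f: "x-2+3*0 = (x-2) + 3*0" "x-2+3*0+2 \<le> n" "\<forall>j\<le>0. \<not> C i ((x-2)+3*j)" "\<not> C i (x-2+3*0+2)"
          "\<not> C (i+1) (x-2+1)" using False nx ns1 xn eqs by auto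
        show False by (rule conjunct2[OF IH[OF lt], rule_format (no_asm), OF f(1) f(2) m1(2) f(3) f(4) f(5)])
      next
        case True
        have "\<not> C i (x-3)"
        proof
          assume "C i (x-3)"
          hence "\<not> C (i+1) (x-2)" using permR[of "x-2"] True e x4 xn eqs by auto
          moreover have "1 \<le> x-2" "x-2 \<le> n" using x4 xn by auto
          ultimately show False using S1[of "x-2"] m1(2) by blast
        qed
        moreover have lt: "x-3 < x" using x4 by auto
        moreover have "1 \<le> x-3" "x-3 \<le> n" using x4 xn by auto
        ultimately show False using conjunct1[OF IH[OF lt], rule_format (no_asm)] m1(3) by blast
      qed
    next
      fix q t
      assume xq: "q = x+3*t" and qn: "q+2 \<le> n" and x2: "x mod 3 = 2"
        and ch: "\<forall>j\<le>t. \<not> C i (x+3*j)" and nq: "\<not> C i (q+2)" and ns: "\<not> C (i+1) (x+1)"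
      have nx: "\<not> C i x" using ch by (metis le0 mult_0_right add_0_right)
      have x1: "1 \<le> x" using lb2a[OF x2] by simp
      have xn: "x \<le> n" using xq qn by simp
      show False
      proof (cases "needy n C i x")
        case True
        have "x+3*t+2 \<le> n" using xq qn by simp
        hence "C i (x+3*t+2)" using RSi x1 xn True ch unfolding RS_def by blast
        thus False using nq xq by simp
      next
        case False
        hence r: "3 \<le> x" "C i (x-2)" "C (i+1) (x-1)" using nx ns unfolding needy_def by auto
        have x5: "5 \<le> x" using lb2b[OF x2 r(1)] .
        have m1: "(x-2) mod 3 = 0" "(x-3) mod 3 = 2" "(x-4) mod 3 = 1"
          using mod3_sub[OF _ x2, of 2] mod3_sub[OF _ x2, of 3] mod3_sub[OF _ x2, of 4] x5 by simp_all
        have eqs: "x-2+1 = x-1" "x-3+1 = x-2" "x-3-1 = x-4" "x-3+3 = x" using x5 by auto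
        have ns2: "\<not> C (i+1) (x-2)" using S2[of "x-2"] r m1 x5 xn eqs by auto
        show False
        proof (cases "C i (x-3)")
          case False
          have lt: "x-3 < x" using x5 by auto
          have a: "q = (x-3) + 3*(t+1)" using xq x5 by simp
          have b: "\<forall>j\<le>t+1. \<not> C i ((x-3)+3*j)"
          proof (intro allI impI)
            fix j assume jt: "j \<le> t+1"
            show "\<not> C i ((x-3)+3*j)"
            proof (cases "j = 0")
              case True thus ?thesis using False by simp
            next
              case False
              hence "(x-3)+3*j = x + 3*(j-1)" "j - 1 \<le> t" using x5 jt by auto
              thus ?thesis using ch by metis
            qed
          qed
          have c: "\<not> C (i+1) (x-3+1)" using ns2 eqs by simp
          show False by (rule conjunct2[OF IH[OF lt], rule_format (no_asm), OF a qn m1(2) b nq c])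
        next
          case True
          have "\<not> C i (x-4)"
          proof
            assume "C i (x-4)"
            hence "\<not> C (i+1) (x-3)" using permR[of "x-3"] True r x5 xn eqs by auto
            moreover have "1 \<le> x-3" "x-3 \<le> n" using x5 xn by auto
            ultimately show False using S1[of "x-3"] m1(2) by blast
          qed
          moreover have lt: "x-4 < x" using x5 by auto
          moreover have "1 \<le> x-4" "x-4 \<le> n" using x5 xn by auto
          ultimately show False using conjunct1[OF IH[OF lt], rule_format (no_asm)] m1(3) by blast
        qed
      qed
    qed
  qed
  have p2'1: "2 \<le> p" using lb2a[OF p2] by simp
  have "p mod 3 \<noteq> 0" using p2 by simp
  hence "p < n" using nlt[OF pn] by blast
  hence p2'2: "p+1 \<le> n" by simp
  note p2' = p2'1 p2'2
  have Sp: "C (i+1) p" using S1 p1 pn p2 by auto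
  have "\<not> C i (p+1) \<or> \<not> C i (p-1)" using permR[OF p2'(1) p2'(2) Cp] Sp by auto
  thus False
  proof
    assume h: "\<not> C i (p+1)"
    have b: "(p+1) mod 3 = 0" using mod3_up[OF p2, of 1] by simp
    have a: "1 \<le> p+1" by simp
    show False by (rule conjunct1[OF R[of "p+1"], rule_format (no_asm), OF a p2'(2) b h])
  next
    assume h: "\<not> C i (p-1)"
    have a: "(p-1) mod 3 = 1" "1 \<le> p-1" "p-1 \<le> n" using mod3_sub[OF _ p2, of 1] p2' pn by auto
    show False by (rule conjunct1[OF L[of "p-1"], rule_format (no_asm), OF a(2) a(3) a(1) h])
  qed
qed

theorem mainTheorem14:
  fixes m n i :: nat and C :: "nat \<Rightarrow> nat \<Rightarrow> bool"
  assumes "ES m n C"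
    and "3 dvd n"
    and "1 \<le> i" and "i + 2 \<le> m"
    and "\<forall>l. 1 \<le> l \<and> l \<le> n \<longrightarrow> (C (i + 2) l \<longleftrightarrow> l mod 3 \<noteq> 2)"
  shows "\<not> (\<exists>j. 1 \<le> j \<and> j \<le> n \<and> \<not> C (i + 2) j \<and> C i j)"
proof
  assume "\<exists>j. 1 \<le> j \<and> j \<le> n \<and> \<not> C (i + 2) j \<and> C i j"
  then obtain j where j: "1 \<le> j" "j \<le> n" "\<not> C (i + 2) j" "C i j" by blast
  have j2: "j mod 3 = 2" using assms(5) j by auto
  have inv: "RS n C i \<and> LS n C i" using inv_RL[OF assms(1) assms(3)] assms(4) by simp
  have "\<not> C i j" using final_part[OF assms(1) assms(2) assms(3) assms(4) assms(5) _ _ j(1) j(2) j2] inv by blast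
  thus False using j(4) by simp
qed

end
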